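(* Let $n=p^{\alpha}q^{\beta}$ where $p,q$ are distinct primes and $\alpha,\beta\geq 1$ are integers. Then the complement graph $\mathbb{AG}^c(\mathbb{Z}_n)$ of $\mathbb{AG}(\mathbb{Z}_n)$ has no induced cycle of odd length greater than $3$.
   Context: For a commutative ring $R$ with unity, the annihilating-ideal graph $\mathbb{AG}(R)$ is the simple graph whose vertex set is the set of all non-zero ideals of $R$ with non-zero annihilator, two distinct vertices $I,J$ being adjacent if and only if $IJ=0$. $\mathbb{AG}^c(R)$ denotes its complement (same vertex set, two distinct vertices adjacent iff they are not adjacent in $\mathbb{AG}(R)$). An induced cycle is an induced subgraph isomorphic to a cycle. *)

theory Defs
  imports "HOL-Algebra.Ideal_Product" "HOL-Number_Theory.Residues"
begin

definition ann :: "('a, 'b) ring_scheme \<Rightarrow> 'a set \<Rightarrow> 'a set" where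
  "ann R I = {x \<in> carrier R. \<forall>i\<in>I. x \<otimes>\<^bsub>R\<^esub> i = \<zero>\<^bsub>R\<^esub>}"

definition AG_vertices :: "('a, 'b) ring_scheme \<Rightarrow> 'a set set" where
  "AG_vertices R = {I. ideal I R \<and> I \<noteq> {\<zero>\<^bsub>R\<^esub>} \<and> ann R I \<noteq> {\<zero>\<^bsub>R\<^esub>}}"

definition AG_adj :: "('a, 'b) ring_scheme \<Rightarrow> 'a set \<Rightarrow> 'a set \<Rightarrow> bool" where
  "AG_adj R I J \<longleftrightarrow> I \<noteq> J \<and> ideal_prod R I J = {\<zero>\<^bsub>R\<^esub>}"

definition AGc_adj :: "('a, 'b) ring_scheme \<Rightarrow> 'a set \<Rightarrow> 'a set \<Rightarrow> bool" where
  "AGc_adj R I J \<longleftrightarrow> I \<noteq> J \<and> \<not> AG_adj R I J"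

definition induced_cycle :: "'v set \<Rightarrow> ('v \<Rightarrow> 'v \<Rightarrow> bool) \<Rightarrow> 'v list \<Rightarrow> bool" where
  "induced_cycle V E vs \<longleftrightarrow>
     length vs \<ge> 3 \<and> distinct vs \<and> set vs \<subseteq> V \<and>
     (\<forall>i < length vs. \<forall>j < length vs.
        E (vs ! i) (vs ! j) \<longleftrightarrow> (j = Suc i mod length vs \<or> i = Suc j mod length vs))"

end

theory Submission
  imports Defs "HOL-Computational_Algebra.Primes"
begin

lemma pp_key:
  fixes P :: int and x x' y y' :: int
  assumes "prime P" "P ^ a dvd x * x'" "P ^ a dvd y * y'"
    "\<not> P ^ a dvd x * y" "\<not> P ^ a dvd x' * y'"
  shows False
proof -
  have nz: "x \<noteq> 0" "x' \<noteq> 0" "y \<noteq> 0" "y' \<noteq> 0" using assms(4,5) by auto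
  have pe: "prime_elem P" using assms(1) by (rule prime_imp_prime_elem)
  have nu: "\<not> is_unit P" using pe by (rule prime_elem_not_unit)
  have m: "P ^ a dvd u * v \<longleftrightarrow> a \<le> multiplicity P u + multiplicity P v"
    if "u \<noteq> 0" "v \<noteq> 0" for u v
  proof -
    have "u * v \<noteq> 0" using that by simp
    then have "P ^ a dvd u * v \<longleftrightarrow> a \<le> multiplicity P (u * v)"
      using nu by (rule power_dvd_iff_le_multiplicity)
    also have "multiplicity P (u * v) = multiplicity P u + multiplicity P v"
      using pe that by (rule prime_elem_multiplicity_mult_distrib)
    finally show ?thesis .
  qed
  have 1: "a \<le> multiplicity P x + multiplicity P x'" using m[OF nz(1,2)] assms(2) by blast
  have 2: "a \<le> multiplicity P y + multiplicity P y'" using m[OF nz(3,4)] assms(3) by blast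
  have 3: "\<not> a \<le> multiplicity P x + multiplicity P y" using m[OF nz(1,3)] assms(4) by blast
  have 4: "\<not> a \<le> multiplicity P x' + multiplicity P y'" using m[OF nz(2,4)] assms(5) by blast
  show False using 1 2 3 4 by linarith
qed

lemma prod_zero_iff:
  fixes N :: int
  assumes "N > 1" "ideal I (residue_ring N)" "ideal J (residue_ring N)"
  shows "ideal_prod (residue_ring N) I J = {0} \<longleftrightarrow> (\<forall>x\<in>I. \<forall>y\<in>J. N dvd x * y)"
proof -
  interpret residues N "residue_ring N" using assms(1) by unfold_locales auto
  have z: "\<zero>\<^bsub>residue_ring N\<^esub> = 0" by (simp add: residue_ring_def)
  have mul: "\<And>x y. x \<otimes>\<^bsub>residue_ring N\<^esub> y = (x * y) mod N" by (simp add: residue_ring_def)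
  have add: "\<And>x y. x \<oplus>\<^bsub>residue_ring N\<^esub> y = (x + y) mod N" by (simp add: residue_ring_def)
  have zI: "0 \<in> I" "0 \<in> J" using assms(2,3) ideal.axioms(1) additive_subgroup.zero_closed z by metis+
  show ?thesis
  proof
    assume h: "ideal_prod (residue_ring N) I J = {0}"
    show "\<forall>x\<in>I. \<forall>y\<in>J. N dvd x * y"
    proof (intro ballI)
      fix x y assume "x \<in> I" "y \<in> J"
      then have "x \<otimes>\<^bsub>residue_ring N\<^esub> y \<in> ideal_prod (residue_ring N) I J" by (rule ideal_prod.prod)
      then show "N dvd x * y" using h mul by (simp add: dvd_eq_mod_eq_0)
    qed
  next
    assume h: "\<forall>x\<in>I. \<forall>y\<in>J. N dvd x * y"
    show "ideal_prod (residue_ring N) I J = {0}"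
    proof
      show "ideal_prod (residue_ring N) I J \<subseteq> {0}"
      proof
        fix s assume "s \<in> ideal_prod (residue_ring N) I J"
        then show "s \<in> {0}"
          by (induct s rule: ideal_prod.induct) (use h mul add in \<open>auto simp: dvd_eq_mod_eq_0\<close>)
      qed
      have "0 \<otimes>\<^bsub>residue_ring N\<^esub> 0 \<in> ideal_prod (residue_ring N) I J"
        using zI by (intro ideal_prod.prod)
      then show "{0} \<subseteq> ideal_prod (residue_ring N) I J" using mul by simp
    qed
  qed
qed


lemma pair_lemma:
  fixes P :: int
  assumes "prime P"
    and "\<not> (\<forall>x\<in>A. \<forall>y\<in>B. P ^ a dvd x * y)"
    and "\<not> (\<forall>x\<in>C. \<forall>y\<in>D. P ^ a dvd x * y)"
    and "\<forall>x\<in>A. \<forall>y\<in>C. P ^ a dvd x * y"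
    and "\<forall>x\<in>B. \<forall>y\<in>D. P ^ a dvd x * y"
  shows False
proof -
  obtain x y where "x \<in> A" "y \<in> B" "\<not> P ^ a dvd x * y" using assms(2) by blast
  moreover obtain x' y' where "x' \<in> C" "y' \<in> D" "\<not> P ^ a dvd x' * y'" using assms(3) by blast
  moreover have "P ^ a dvd x * x'" using assms(4) \<open>x \<in> A\<close> \<open>x' \<in> C\<close> by blast
  moreover have "P ^ a dvd y * y'" using assms(5) \<open>y \<in> B\<close> \<open>y' \<in> D\<close> by blast
  ultimately show False using pp_key[OF assms(1), of a x x' y y'] by simp
qed

theorem lemma7:
  fixes p q \<alpha> \<beta> n :: nat
  assumes "prime p" and "prime q" and "p \<noteq> q"
    and "\<alpha> \<ge> 1" and "\<beta> \<ge> 1"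
    and "n = p ^ \<alpha> * q ^ \<beta>"
  shows "\<not> (\<exists>vs. induced_cycle (AG_vertices (residue_ring (int n))) (AGc_adj (residue_ring (int n))) vs
               \<and> odd (length vs) \<and> length vs > 3)"
proof
  assume "\<exists>vs. induced_cycle (AG_vertices (residue_ring (int n))) (AGc_adj (residue_ring (int n))) vs
               \<and> odd (length vs) \<and> length vs > 3"
  then obtain vs where ic: "induced_cycle (AG_vertices (residue_ring (int n))) (AGc_adj (residue_ring (int n))) vs"
    and odd: "odd (length vs)" and k3: "length vs > 3" by blast
  define R where "R = residue_ring (int n)"
  define k where "k = length vs"
  define v where "v = (\<lambda>i. vs ! i)"
  define s where "s = (\<lambda>i. Suc i mod k)"
  define P where "P = int p"
  define Q where "Q = int q"
  define Pd where "Pd = (\<lambda>I J. \<forall>x\<in>I. \<forall>y\<in>J. P ^ \<alpha> dvd (x::int) * y)"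
  define Qd where "Qd = (\<lambda>I J. \<forall>x\<in>I. \<forall>y\<in>J. Q ^ \<beta> dvd (x::int) * y)"
  have k5: "k \<ge> 5" using odd k3 unfolding k_def by presburger
  have pP: "prime P" "prime Q" using assms(1,2) unfolding P_def Q_def
    by (simp_all only: prime_nat_int_transfer)
  have n1: "int n > 1"
  proof -
    have "p ^ \<alpha> > 1" using assms(1,4) prime_gt_1_nat by (intro one_less_power) auto
    moreover have "q ^ \<beta> \<ge> 1" using assms(2) prime_gt_0_nat by (simp add: Suc_leI)
    then have "p ^ \<alpha> * 1 \<le> p ^ \<alpha> * q ^ \<beta>" by (rule mult_le_mono2)
    ultimately have "n > 1" using assms(6) by linarith
    then show ?thesis by simp
  qed
  have "coprime p q" using assms(1-3) by (rule primes_coprime)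
  then have "coprime P Q" unfolding P_def Q_def by (simp only: coprime_int_iff)
  then have cop: "coprime (P ^ \<alpha>) (Q ^ \<beta>)" by (simp only: coprime_power_left_iff coprime_power_right_iff simp_thms)
  have Nsplit: "int n dvd m \<longleftrightarrow> P ^ \<alpha> dvd m \<and> Q ^ \<beta> dvd m" for m
  proof -
    have eq: "int n = P ^ \<alpha> * Q ^ \<beta>" using assms(6) unfolding P_def Q_def by (simp only: of_nat_mult of_nat_power)
    show ?thesis
    proof
      assume h: "int n dvd m"
      have "P ^ \<alpha> dvd int n" "Q ^ \<beta> dvd int n" unfolding eq by (rule dvd_triv_left, rule dvd_triv_right)
      then show "P ^ \<alpha> dvd m \<and> Q ^ \<beta> dvd m" using h by (blast intro: dvd_trans)
    next
      assume h: "P ^ \<alpha> dvd m \<and> Q ^ \<beta> dvd m"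
      show "int n dvd m" unfolding eq using h cop by (blast intro: divides_mult)
    qed
  qed
  have icd: "distinct vs" "set vs \<subseteq> AG_vertices R"
    "\<forall>i<k. \<forall>j<k. AGc_adj R (v i) (v j) \<longleftrightarrow> (j = s i \<or> i = s j)"
    using ic unfolding induced_cycle_def R_def k_def v_def s_def by blast+
  have vid: "ideal (v i) R" if "i < k" for i
  proof -
    have "vs ! i \<in> set vs" using that unfolding k_def by simp
    then show ?thesis using icd(2) unfolding AG_vertices_def v_def by blast
  qed
  have prodiff: "ideal_prod R (v i) (v j) = {0} \<longleftrightarrow> Pd (v i) (v j) \<and> Qd (v i) (v j)"
    if "i < k" "j < k" for i j
    using prod_zero_iff[OF n1 vid[OF that(1), unfolded R_def] vid[OF that(2), unfolded R_def]]
    unfolding Pd_def Qd_def Nsplit by (auto simp: R_def)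
  have zR: "\<zero>\<^bsub>R\<^esub> = 0" by (simp add: R_def residue_ring_def)
  have edge: "\<not> (Pd (v i) (v (s i)) \<and> Qd (v i) (v (s i)))" if "i < k" for i
  proof -
    have sk: "s i < k" unfolding s_def using k5 by simp
    have "AGc_adj R (v i) (v (s i))"
      using icd(3) that sk by blast
    then show ?thesis using prodiff[OF that sk] zR unfolding AGc_adj_def AG_adj_def by auto
  qed
  have nonadj: "Pd (v i) (v j) \<and> Qd (v i) (v j)"
    if "i < k" "j < k" "i \<noteq> j" "j \<noteq> s i" "i \<noteq> s j" for i j
  proof -
    have "\<not> AGc_adj R (v i) (v j)"
      using icd(3) that by blast
    moreover have "v i \<noteq> v j" using icd(1) that unfolding k_def v_def
      by (simp add: nth_eq_iff_index_eq)
    ultimately show ?thesis using prodiff[OF that(1,2)] zR unfolding AGc_adj_def AG_adj_def by auto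
  qed
  have key: "(Pd (v i) (v (s i)) \<or> Pd (v j) (v (s j))) \<and> (Qd (v i) (v (s i)) \<or> Qd (v j) (v (s j)))"
    if "i < k" "j < k" "i \<noteq> j" "j \<noteq> s i" "i \<noteq> s j"
       "s i \<noteq> s j" "s j \<noteq> s (s i)" "s i \<noteq> s (s j)" for i j
  proof -
    have sk: "s i < k" "s j < k" unfolding s_def using k5 by simp_all
    have a: "Pd (v i) (v j) \<and> Qd (v i) (v j)" using nonadj that by blast
    have b: "Pd (v (s i)) (v (s j)) \<and> Qd (v (s i)) (v (s j))" using nonadj sk that by blast
    show ?thesis
      using a b pair_lemma[OF pP(1), of "v i" "v (s i)" \<alpha> "v j" "v (s j)"]
        pair_lemma[OF pP(2), of "v i" "v (s i)" \<beta> "v j" "v (s j)"]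
      unfolding Pd_def Qd_def by blast
  qed
  have e: "\<not> (Pd (v i) (v (s i)) \<and> Qd (v i) (v (s i)))" if "i < 5" for i
    using edge that k5 by simp
  have s0: "s 0 = 1" "s 1 = 2" "s 2 = 3" "s 3 = 4" unfolding s_def using k5 by simp_all
  consider "k = 5" | "k \<ge> 6" using k5 by linarith
  then have idx: "s 4 \<noteq> 1 \<and> s 4 \<noteq> 2 \<and> s 4 \<noteq> 3 \<and> s 4 \<noteq> 4 \<and> s (s 4) \<noteq> 3 \<and> s (s 4) \<noteq> 4 \<and> s (s 4) \<noteq> 2
       \<and> s (s 4) \<noteq> 2 \<and> s 4 < k"
  proof cases
    case 1 then show ?thesis unfolding s_def by simp
  next
    case 2
    then have "s 4 = 5" unfolding s_def by simp
    moreover have "s 5 = 0 \<or> s 5 = 6"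
    proof (cases "k = 6")
      case True then show ?thesis unfolding s_def by simp
    next
      case False then have "6 < k" using 2 by linarith
      then show ?thesis unfolding s_def by simp
    qed
    ultimately show ?thesis using 2 by auto
  qed
  have p02: "(Pd (v 0) (v (s 0)) \<or> Pd (v 2) (v (s 2))) \<and> (Qd (v 0) (v (s 0)) \<or> Qd (v 2) (v (s 2)))"
    using key[of 0 2] k5 s0 by simp
  have p03: "(Pd (v 0) (v (s 0)) \<or> Pd (v 3) (v (s 3))) \<and> (Qd (v 0) (v (s 0)) \<or> Qd (v 3) (v (s 3)))"
    using key[of 0 3] k5 s0 idx by simp
  have p13: "(Pd (v 1) (v (s 1)) \<or> Pd (v 3) (v (s 3))) \<and> (Qd (v 1) (v (s 1)) \<or> Qd (v 3) (v (s 3)))"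
    using key[of 1 3] k5 s0 idx by simp
  have p14: "(Pd (v 1) (v (s 1)) \<or> Pd (v 4) (v (s 4))) \<and> (Qd (v 1) (v (s 1)) \<or> Qd (v 4) (v (s 4)))"
    using key[of 1 4] k5 s0 idx by simp
  have p24: "(Pd (v 2) (v (s 2)) \<or> Pd (v 4) (v (s 4))) \<and> (Qd (v 2) (v (s 2)) \<or> Qd (v 4) (v (s 4)))"
    using key[of 2 4] k5 s0 idx by simp
  have five: "0 < (5::nat)" "1 < (5::nat)" "2 < (5::nat)" "3 < (5::nat)" "4 < (5::nat)" by simp_all
  show False using five e[of 0] e[of 1] e[of 2] e[of 3] e[of 4] p02 p03 p13 p14 p24 by blast
qed

end
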